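(* Let $\rho=\frac12(I+x\sigma_1+y\sigma_2+z\sigma_3)$ with $r:=\sqrt{x^2+y^2+z^2}\in(0,1)$, let $A\in M_2(\mathbb C)$ be self-adjoint and $f\in\mathcal F^{\,r}_{op}$. Then $$I^{SLD}_\rho(A)=\frac{r^2}{1-m_{\tilde f}(1-r,1+r)}\,I^f_\rho(A).$$
   Context: $\sigma_1,\sigma_2,\sigma_3$ are the Pauli matrices. $\mathcal F_{op}$ is the class of functions $f:(0,\infty)\to(0,\infty)$ that are operator monotone, satisfy $f(1)=1$ and $tf(t^{-1})=f(t)$ for all $t>0$. $f(0):=\lim_{x\to0^+}f(x)$, and $\mathcal F^{\,r}_{op}=\{f\in\mathcal F_{op}: f(0)\neq0\}$. For $f\in\mathcal F^{\,r}_{op}$, $\tilde f(x):=\frac12\big[(x+1)-(x-1)^2\frac{f(0)}{f(x)}\big]$ for $x>0$. For $g\in\mathcal F_{op}$ and $x,y>0$, $m_g(x,y)=xg(y/x)$. $L_\rho(X)=\rho X$, $R_\rho(X)=X\rho$, and $m_f(L_\rho,R_\rho)$ multiplies the entry $X_{ij}$ of $X$ (in an orthonormal eigenbasis of $\rho$ with eigenvalues $\lambda_i$) by $m_f(\lambda_i,\lambda_j)$. $\|X\|^2_{\rho,f}=\mathrm{Tr}\big(X^* m_f(L_\rho,R_\rho)^{-1}(X)\big)$. The $f$-information is $I^f_\rho(A)=\frac{f(0)}{2}\|i[\rho,A]\|^2_{\rho,f}$, and $I^{SLD}_\rho:=I^{f_{SLD}}_\rho$ with $f_{SLD}(x)=\frac{1+x}{2}$.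 *)

theory Defs
  imports "Jordan_Normal_Form.Schur_Decomposition"
begin

definition hermitian_mat :: "complex mat \<Rightarrow> bool" where
  "hermitian_mat A \<longleftrightarrow> A \<in> carrier_mat (dim_row A) (dim_row A) \<and> mat_adjoint A = A"

definition unitary_mat :: "nat \<Rightarrow> complex mat \<Rightarrow> bool" where
  "unitary_mat n U \<longleftrightarrow> U \<in> carrier_mat n n \<and> U * mat_adjoint U = 1\<^sub>m n \<and> mat_adjoint U * U = 1\<^sub>m n"

definition psd_mat :: "complex mat \<Rightarrow> bool" where
  "psd_mat A \<longleftrightarrow> hermitian_mat A \<and>
     (\<forall>v \<in> carrier_vec (dim_row A). 0 \<le> Re ((A *\<^sub>v v) \<bullet>c v))"

definition diag_real :: "real list \<Rightarrow> complex mat" where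
  "diag_real d = mat (length d) (length d) (\<lambda>(i,j). if i = j then complex_of_real (d ! i) else 0)"

definition spectral_decomp :: "nat \<Rightarrow> complex mat \<Rightarrow> complex mat \<Rightarrow> real list \<Rightarrow> bool" where
  "spectral_decomp n A U d \<longleftrightarrow> unitary_mat n U \<and> length d = n \<and> A = U * diag_real d * mat_adjoint U"

text \<open>\<open>FA = f(A)\<close> for a positive definite \<open>A\<close> (functional calculus via a spectral decomposition).\<close>
definition mat_fun_rel :: "(real \<Rightarrow> real) \<Rightarrow> complex mat \<Rightarrow> complex mat \<Rightarrow> bool" where
  "mat_fun_rel f A FA \<longleftrightarrow> (\<exists>n U d. A \<in> carrier_mat n n \<and> spectral_decomp n A U d \<and>
      (\<forall>x \<in> set d. x > 0) \<and> FA = U * diag_real (map f d) * mat_adjoint U)"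

definition operator_monotone :: "(real \<Rightarrow> real) \<Rightarrow> bool" where
  "operator_monotone f \<longleftrightarrow> (\<forall>n A B FA FB. A \<in> carrier_mat n n \<longrightarrow> B \<in> carrier_mat n n \<longrightarrow>
      psd_mat (B - A) \<longrightarrow> mat_fun_rel f A FA \<longrightarrow> mat_fun_rel f B FB \<longrightarrow> psd_mat (FB - FA))"

definition F_op :: "(real \<Rightarrow> real) \<Rightarrow> bool" where
  "F_op f \<longleftrightarrow> (\<forall>x>0. f x > 0) \<and> operator_monotone f \<and> f 1 = 1 \<and> (\<forall>t>0. t * f (1 / t) = f t)"

definition f_zero :: "(real \<Rightarrow> real) \<Rightarrow> real" where
  "f_zero f = Lim (at_right 0) f"

definition F_op_r :: "(real \<Rightarrow> real) \<Rightarrow> bool" where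
  "F_op_r f \<longleftrightarrow> F_op f \<and> f_zero f \<noteq> 0"

definition f_tilde :: "(real \<Rightarrow> real) \<Rightarrow> real \<Rightarrow> real" where
  "f_tilde f x = ((x + 1) - (x - 1)^2 * f_zero f / f x) / 2"

definition m_mean :: "(real \<Rightarrow> real) \<Rightarrow> real \<Rightarrow> real \<Rightarrow> real" where
  "m_mean g x y = x * g (y / x)"

definition f_SLD :: "real \<Rightarrow> real" where
  "f_SLD x = (1 + x) / 2"

definition mtrace :: "complex mat \<Rightarrow> complex" where
  "mtrace A = (\<Sum>i<dim_row A. A $$ (i,i))"

text \<open>\<open>m_f(L_\<rho>,R_\<rho>)^{-1}(X)\<close> computed in an orthonormal eigenbasis of \<open>\<rho>\<close>.
  The eigenbasis is chosen via SOME; the result does not depend on the choice.\<close>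
definition mf_inv :: "(real \<Rightarrow> real) \<Rightarrow> complex mat \<Rightarrow> complex mat \<Rightarrow> complex mat" where
  "mf_inv f \<rho> X = (let n = dim_row \<rho>;
      (U, d) = (SOME (U, d). spectral_decomp n \<rho> U d);
      Y = mat_adjoint U * X * U;
      Z = mat n n (\<lambda>(i,j). Y $$ (i,j) / complex_of_real (m_mean f (d ! i) (d ! j)))
    in U * Z * mat_adjoint U)"

definition normsq_f :: "(real \<Rightarrow> real) \<Rightarrow> complex mat \<Rightarrow> complex mat \<Rightarrow> complex" where
  "normsq_f f \<rho> X = mtrace (mat_adjoint X * mf_inv f \<rho> X)"

definition f_information :: "(real \<Rightarrow> real) \<Rightarrow> complex mat \<Rightarrow> complex mat \<Rightarrow> complex" where
  "f_information f \<rho> A =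
     complex_of_real (f_zero f / 2) * normsq_f f \<rho> (\<i> \<cdot>\<^sub>m (\<rho> * A - A * \<rho>))"

definition SLD_information :: "complex mat \<Rightarrow> complex mat \<Rightarrow> complex" where
  "SLD_information \<rho> A = f_information f_SLD \<rho> A"

definition sigma1 :: "complex mat" where "sigma1 = mat_of_rows_list 2 [[0, 1], [1, 0]]"
definition sigma2 :: "complex mat" where "sigma2 = mat_of_rows_list 2 [[0, -\<i>], [\<i>, 0]]"
definition sigma3 :: "complex mat" where "sigma3 = mat_of_rows_list 2 [[1, 0], [0, -1]]"

definition qubit_state :: "real \<Rightarrow> real \<Rightarrow> real \<Rightarrow> complex mat" where
  "qubit_state x y z = (1/2 :: complex) \<cdot>\<^sub>m (1\<^sub>m 2 + complex_of_real x \<cdot>\<^sub>m sigma1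
      + complex_of_real y \<cdot>\<^sub>m sigma2 + complex_of_real z \<cdot>\<^sub>m sigma3)"

end

theory Submission
  imports Defs
begin
lemma adj_carrier[simp]: "mat_adjoint (A::complex mat) \<in> carrier_mat (dim_col A) (dim_row A)"
  unfolding mat_adjoint_def by auto
lemma adj_dims[simp]: "dim_row (mat_adjoint (A::complex mat)) = dim_col A" "dim_col (mat_adjoint A) = dim_row A"
  unfolding mat_adjoint_def by auto
lemma adj_index[simp]: "i < dim_col A \<Longrightarrow> j < dim_row A \<Longrightarrow> mat_adjoint (A::complex mat) $$ (i,j) = cnj (A $$ (j,i))"
  unfolding mat_adjoint_def by (auto simp: mat_of_rows_def)
lemma adj_adj[simp]: "mat_adjoint (mat_adjoint (A::complex mat)) = A"
  by (rule eq_matI) auto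
lemma adj_mult: "(A::complex mat) \<in> carrier_mat n m \<Longrightarrow> B \<in> carrier_mat m k \<Longrightarrow>
   mat_adjoint (A * B) = mat_adjoint B * mat_adjoint A"
  by (rule eq_matI) (auto simp: scalar_prod_def cnj_sum intro!: sum.cong)
lemma adj_smult: "mat_adjoint (c \<cdot>\<^sub>m (A::complex mat)) = cnj c \<cdot>\<^sub>m mat_adjoint A"
  by (rule eq_matI) auto
lemma adj_minus: "(A::complex mat) \<in> carrier_mat n m \<Longrightarrow> B \<in> carrier_mat n m \<Longrightarrow>
   mat_adjoint (A - B) = mat_adjoint A - mat_adjoint B"
  by (rule eq_matI) auto
lemma mtrace_comm: "(A::complex mat) \<in> carrier_mat n m \<Longrightarrow> B \<in> carrier_mat m n \<Longrightarrow>
   mtrace (A * B) = mtrace (B * A)"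
  unfolding mtrace_def
  apply (simp add: scalar_prod_def)
  apply (subst sum.swap)
  by (auto simp: lessThan_atLeast0 mult.commute intro!: sum.cong)


lemma conj_trace:
  assumes U: "unitary_mat n U" and M: "M \<in> carrier_mat n n"
  shows "mtrace (U * M * mat_adjoint U) = mtrace M"
proof -
  have Uc: "U \<in> carrier_mat n n" and UH: "mat_adjoint U * U = 1\<^sub>m n" using U unfolding unitary_mat_def by auto
  have Hc: "mat_adjoint U \<in> carrier_mat n n" using Uc adj_carrier[of U] by auto
  have "mtrace (U * M * mat_adjoint U) = mtrace (mat_adjoint U * (U * M))"
    by (rule mtrace_comm[of _ n n]) (use Uc M Hc in auto)
  also have "mat_adjoint U * (U * M) = M"
    using Uc M Hc UH by (simp add: assoc_mult_mat[symmetric, of _ n n _ n _ n])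
  finally show ?thesis .
qed

lemma trace_form:
  assumes U: "unitary_mat n U" and X: "X \<in> carrier_mat n n" and Z: "Z \<in> carrier_mat n n"
  shows "mtrace (mat_adjoint X * (U * Z * mat_adjoint U)) =
         mtrace (mat_adjoint (mat_adjoint U * X * U) * Z)"
proof -
  have Uc: "U \<in> carrier_mat n n" and UH: "mat_adjoint U * U = 1\<^sub>m n" and HU: "U * mat_adjoint U = 1\<^sub>m n"
    using U unfolding unitary_mat_def by auto
  have Hc: "mat_adjoint U \<in> carrier_mat n n" using Uc adj_carrier[of U] by auto
  define Y where "Y = mat_adjoint U * X * U"
  have Yc: "Y \<in> carrier_mat n n" unfolding Y_def using Hc X Uc by auto
  have XY: "X = U * Y * mat_adjoint U"
  proof -
    have "U * Y * mat_adjoint U = (U * mat_adjoint U) * X * (U * mat_adjoint U)"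
      unfolding Y_def using Uc Hc X
      by (simp add: assoc_mult_mat[of _ n n _ n _ n])
    thus ?thesis using HU X by simp
  qed
  have XH: "mat_adjoint X = U * mat_adjoint Y * mat_adjoint U"
    unfolding XY using Uc Hc Yc
    by (simp add: adj_mult[of _ n n _ n] assoc_mult_mat[of _ n n _ n _ n])
  have YHc: "mat_adjoint Y \<in> carrier_mat n n" using Yc adj_carrier[of Y] by auto
  have "mat_adjoint X * (U * Z * mat_adjoint U) = U * (mat_adjoint Y * Z) * mat_adjoint U"
  proof -
    have "mat_adjoint X * (U * Z * mat_adjoint U) = U * mat_adjoint Y * (mat_adjoint U * U) * Z * mat_adjoint U"
      unfolding XH using Uc Hc YHc Z
      by (simp add: assoc_mult_mat[of _ n n _ n _ n])
    also have "\<dots> = U * (mat_adjoint Y * Z) * mat_adjoint U"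
      unfolding UH using Uc Hc YHc Z
      by (simp add: assoc_mult_mat[of _ n n _ n _ n])
    finally show ?thesis .
  qed
  also have "mtrace \<dots> = mtrace (mat_adjoint Y * Z)"
    by (rule conj_trace[OF U]) (use YHc Z in auto)
  finally show ?thesis unfolding Y_def .
qed

lemma comm_form:
  assumes U: "unitary_mat n U" and D: "D \<in> carrier_mat n n" and A: "A \<in> carrier_mat n n"
    and rho: "\<rho> = U * D * mat_adjoint U"
  shows "mat_adjoint U * (c \<cdot>\<^sub>m (\<rho> * A - A * \<rho>)) * U =
         c \<cdot>\<^sub>m (D * (mat_adjoint U * A * U) - (mat_adjoint U * A * U) * D)"
proof -
  have Uc: "U \<in> carrier_mat n n" and UH: "mat_adjoint U * U = 1\<^sub>m n" and HU: "U * mat_adjoint U = 1\<^sub>m n"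
    using U unfolding unitary_mat_def by auto
  have Hc: "mat_adjoint U \<in> carrier_mat n n" using Uc adj_carrier[of U] by auto
  have rc: "\<rho> \<in> carrier_mat n n" unfolding rho using Uc D Hc by auto
  have e1: "mat_adjoint U * (\<rho> * A) * U = D * (mat_adjoint U * A * U)"
  proof -
    have "mat_adjoint U * (\<rho> * A) * U = (mat_adjoint U * U) * D * (mat_adjoint U * A * U)"
      unfolding rho using Uc Hc D A by (simp add: assoc_mult_mat[of _ n n _ n _ n])
    thus ?thesis using UH D by simp
  qed
  have e2: "mat_adjoint U * (A * \<rho>) * U = (mat_adjoint U * A * U) * D"
  proof -
    have "mat_adjoint U * (A * \<rho>) * U = (mat_adjoint U * A * U) * D * (mat_adjoint U * U)"
      unfolding rho using Uc Hc D A by (simp add: assoc_mult_mat[of _ n n _ n _ n])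
    thus ?thesis using UH D Hc A Uc by simp
  qed
  have "mat_adjoint U * (c \<cdot>\<^sub>m (\<rho> * A - A * \<rho>)) * U = c \<cdot>\<^sub>m (mat_adjoint U * (\<rho> * A - A * \<rho>) * U)"
  proof -
    have Mc: "\<rho> * A - A * \<rho> \<in> carrier_mat n n" using rc A by auto
    show ?thesis using mult_smult_distrib[OF Hc Mc, of c] mult_smult_assoc_mat[of _ n n U n c] Hc Mc Uc by simp
  qed
  also have "mat_adjoint U * (\<rho> * A - A * \<rho>) * U = mat_adjoint U * (\<rho> * A) * U - mat_adjoint U * (A * \<rho>) * U"
  proof -
    have a: "\<rho> * A \<in> carrier_mat n n" "A * \<rho> \<in> carrier_mat n n" using rc A by auto
    have "mat_adjoint U * (\<rho> * A - A * \<rho>) = mat_adjoint U * (\<rho> * A) - mat_adjoint U * (A * \<rho>)"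
      by (rule mult_minus_distrib_mat[OF Hc a])
    moreover have "(mat_adjoint U * (\<rho> * A) - mat_adjoint U * (A * \<rho>)) * U = mat_adjoint U * (\<rho> * A) * U - mat_adjoint U * (A * \<rho>) * U"
      by (rule minus_mult_distrib_mat[of _ n n]) (use Hc a Uc in auto)
    ultimately show ?thesis by simp
  qed
  finally show ?thesis unfolding e1 e2 .
qed

lemma sum2: "(\<Sum>i<(2::nat). f i) = f 0 + f 1" "(\<Sum>i\<in>{0..<(2::nat)}. f i) = f 0 + f 1"
  by (simp_all add: numeral_2_eq_2 atLeast0_lessThan_Suc lessThan_Suc add.commute)

lemma diag_real_dims: "dim_row (diag_real d) = length d" "dim_col (diag_real d) = length d"
  unfolding diag_real_def by auto
lemma diag_real_index: "i < length d \<Longrightarrow> j < length d \<Longrightarrow>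
  diag_real d $$ (i,j) = (if i = j then complex_of_real (d ! i) else 0)"
  unfolding diag_real_def by auto

lemma trace2:
  assumes d: "length d = 2" and B: "B \<in> carrier_mat 2 2" and BH: "mat_adjoint B = B"
  defines "Y \<equiv> \<i> \<cdot>\<^sub>m (diag_real d * B - B * diag_real d)"
  shows "mtrace (mat_adjoint Y * mat 2 2 (\<lambda>(i,j). Y $$ (i,j) / complex_of_real (g (d!i) (d!j)))) =
    complex_of_real ((d!0 - d!1)^2 * (cmod (B $$ (0,1)))^2 * (1/g (d!0) (d!1) + 1/g (d!1) (d!0)))"
proof -
  have b10: "B $$ (1,0) = cnj (B $$ (0,1))"
    using arg_cong[OF BH, of "\<lambda>M. M $$ (1,0)"] B by auto
  have Dc: "diag_real d \<in> carrier_mat 2 2" using d unfolding diag_real_def by auto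
  have Yc: "Y \<in> carrier_mat 2 2" unfolding Y_def by (meson Dc B minus_carrier_mat mult_carrier_mat smult_carrier_mat)
  note diag_real_dims[simp] diag_real_index[simp]
  have Yij: "Y $$ (i,j) = \<i> * complex_of_real (d!i - d!j) * B $$ (i,j)" if "i < 2" "j < 2" for i j
    unfolding Y_def using that B d
    by (simp add: diag_real_def scalar_prod_def sum2 less_2_cases_iff) (auto simp: algebra_simps)
  show ?thesis
    unfolding mtrace_def using Yc
    apply (simp add: scalar_prod_def sum2 Yij b10[simplified])
    apply (simp add: complex_norm_square[symmetric] power2_eq_square divide_inverse algebra_simps)
    done
qed

lemma mat2_eqI:
  assumes "dim_row A = 2" "dim_col A = 2" "dim_row B = 2" "dim_col B = 2"
    "A $$ (0,0) = B $$ (0,0)" "A $$ (0,1) = B $$ (0,1)" "A $$ (1,0) = B $$ (1,0)" "A $$ (1,1) = B $$ (1,1)"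
  shows "A = B"
  by (rule eq_matI) (use assms in \<open>auto simp: less_2_cases_iff\<close>)

lemma mult2: "dim_row A = 2 \<Longrightarrow> dim_col A = 2 \<Longrightarrow> dim_row B = 2 \<Longrightarrow> dim_col B = 2 \<Longrightarrow> i < 2 \<Longrightarrow> j < 2 \<Longrightarrow>
  (A * B) $$ (i,j) = A $$ (i,0) * B $$ (0,j) + A $$ (i,1) * B $$ (1,j)"
  by (simp add: scalar_prod_def sum2)

lemma mult_dims[simp]: "dim_row ((A::complex mat) * B) = dim_row A" "dim_col ((A::complex mat) * B) = dim_col B"
  by auto

lemma diag2[simp]: "dim_row (diag_real [a,b]) = 2" "dim_col (diag_real [a,b]) = 2"
  "diag_real [a,b] $$ (0,0) = complex_of_real a" "diag_real [a,b] $$ (1,1) = complex_of_real b"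
  "diag_real [a,b] $$ (0,1) = 0" "diag_real [a,b] $$ (1,0) = 0"
  "diag_real [a,b] $$ (Suc 0,Suc 0) = complex_of_real b"
  "diag_real [a,b] $$ (0,Suc 0) = 0" "diag_real [a,b] $$ (Suc 0,0) = 0"
  unfolding diag_real_def by auto

definition rhoM :: "real \<Rightarrow> real \<Rightarrow> real \<Rightarrow> complex mat" where
  "rhoM x y z = mat 2 2 (\<lambda>(i,j). if i = 0 then (if j = 0 then Complex ((1+z)/2) 0 else Complex (x/2) (-y/2))
        else (if j = 0 then Complex (x/2) (y/2) else Complex ((1-z)/2) 0))"

lemma rhoM_eq: "qubit_state x y z = rhoM x y z"
  unfolding qubit_state_def rhoM_def sigma1_def sigma2_def sigma3_def
  by (rule eq_matI) (auto simp: less_2_cases_iff mat_of_rows_list_def complex_eq_iff)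

definition Umat :: "real \<Rightarrow> real \<Rightarrow> real \<Rightarrow> complex mat" where
  "Umat a b c = mat 2 2 (\<lambda>(i,j).
         if i = 0 then (if j = 0 then Complex a (-b) else Complex (-c) 0)
         else (if j = 0 then Complex c 0 else Complex a b))"

lemma Umat_simps[simp]: "dim_row (Umat a b c) = 2" "dim_col (Umat a b c) = 2"
  "Umat a b c $$ (0,0) = Complex a (-b)"
  "Umat a b c $$ (0,1) = Complex (-c) 0"
  "Umat a b c $$ (1,0) = Complex c 0"
  "Umat a b c $$ (1,1) = Complex a b"
  "Umat a b c $$ (0,Suc 0) = Complex (-c) 0"
  "Umat a b c $$ (Suc 0,0) = Complex c 0"
  "Umat a b c $$ (Suc 0,Suc 0) = Complex a b"
  unfolding Umat_def by auto

lemma rhoM_simps[simp]: "dim_row (rhoM x y z) = 2" "dim_col (rhoM x y z) = 2"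
  "rhoM x y z $$ (0,0) = Complex ((1+z)/2) 0"
  "rhoM x y z $$ (0,1) = Complex (x/2) (-y/2)"
  "rhoM x y z $$ (1,0) = Complex (x/2) (y/2)"
  "rhoM x y z $$ (1,1) = Complex ((1-z)/2) 0"
  "rhoM x y z $$ (0,Suc 0) = Complex (x/2) (-y/2)"
  "rhoM x y z $$ (Suc 0,0) = Complex (x/2) (y/2)"
  "rhoM x y z $$ (Suc 0,Suc 0) = Complex ((1-z)/2) 0"
  unfolding rhoM_def by auto

lemma spec_exists:
  assumes r: "r = sqrt (x^2+y^2+z^2)" and rp: "0 < r"
  shows "spectral_decomp 2 (rhoM x y z) (if z = r then 1\<^sub>m 2 else
     Umat (x / sqrt (2*r*(r-z))) (y / sqrt (2*r*(r-z))) ((r-z) / sqrt (2*r*(r-z))))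
     [(1+r)/2, (1-r)/2]"
proof -
  have r2: "r^2 = x^2+y^2+z^2" unfolding r by simp
  have rz: "z \<le> r" unfolding r by (rule real_le_rsqrt) simp
  show ?thesis
  proof (cases "z = r")
    case True
    then have xy: "x = 0" "y = 0" using r2 by (auto simp: power2_eq_square add_nonneg_eq_0_iff)
    show ?thesis using True
      unfolding spectral_decomp_def unitary_mat_def
      apply (simp add: True del: index_mult_mat)
      apply (intro conjI mat2_eqI)
      apply (auto simp: xy mult2 complex_eq_iff simp del: index_mult_mat)
      done
  next
    case False
    define N where "N = sqrt (2*r*(r-z))"
    have zr: "z < r" using False rz by auto
    have Np: "N > 0" unfolding N_def using zr rp by auto
    have NN: "N * N = 2*r*(r-z)" unfolding N_def using zr rp by simp
    have xy: "x*x + y*y = r*r - z*z" using r2 by (simp add: power2_eq_square)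
    define a where "a = x / N"
    define b where "b = y / N"
    define c where "c = (r - z) / N"
    have f1: "2*r*(a*a+b*b) = r + z"
    proof -
      have "a*a+b*b = (x*x+y*y)/(N*N)" unfolding a_def b_def by (simp add: add_divide_distrib)
      also have "\<dots> = (r*r-z*z)/(2*r*(r-z))" unfolding xy NN ..
      also have "\<dots> = (r+z)/(2*r)" using zr rp by (simp add: field_simps)
      finally show ?thesis using rp by (simp add: field_simps)
    qed
    have f2: "2*r*(c*c) = r - z"
    proof -
      have "c*c = (r-z)*(r-z)/(N*N)" unfolding c_def by simp
      also have "\<dots> = (r-z)*(r-z)/(2*r*(r-z))" unfolding NN ..
      also have "\<dots> = (r-z)/(2*r)" using zr rp by (simp add: field_simps)
      finally show ?thesis using rp by (simp add: field_simps)
    qed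
    have f3: "2*r*a*c = x"
    proof -
      have "a*c = x*(r-z)/(N*N)" unfolding a_def c_def by simp
      also have "\<dots> = x*(r-z)/(2*r*(r-z))" unfolding NN ..
      also have "\<dots> = x/(2*r)" using zr rp by (simp add: field_simps)
      finally show ?thesis using rp by (simp add: field_simps)
    qed
    have f4: "2*r*b*c = y"
    proof -
      have "b*c = y*(r-z)/(N*N)" unfolding b_def c_def by simp
      also have "\<dots> = y*(r-z)/(2*r*(r-z))" unfolding NN ..
      also have "\<dots> = y/(2*r)" using zr rp by (simp add: field_simps)
      finally show ?thesis using rp by (simp add: field_simps)
    qed
    have rne: "r \<noteq> 0" using rp by simp
    have "2*r*(a*a+b*b+c*c) = 2*r*1" using f1 f2 by (simp add: algebra_simps)
    hence s1: "a*a+b*b+c*c = 1" using rne by simp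
    show ?thesis using False
      unfolding spectral_decomp_def unitary_mat_def N_def[symmetric] a_def[symmetric] b_def[symmetric] c_def[symmetric]
      apply (simp del: index_mult_mat)
      apply (intro conjI mat2_eqI)
      apply (auto simp: mult2 complex_eq_iff simp del: index_mult_mat)
      using s1 f1 f2 f3 f4 apply (simp_all add: field_simps)
      done
  qed
qed

lemma mtrace2: "dim_row M = 2 \<Longrightarrow> mtrace M = M $$ (0,0) + M $$ (1,1)"
  unfolding mtrace_def by (simp add: sum2)

lemma eig_facts:
  assumes sd: "spectral_decomp 2 (rhoM x y z) U d" and r: "r = sqrt (x^2+y^2+z^2)"
  shows "d!0 + d!1 = 1" "(d!0)^2 + (d!1)^2 = (1 + r^2)/2"
proof -
  have U: "unitary_mat 2 U" and ld: "length d = 2" and rho: "rhoM x y z = U * diag_real d * mat_adjoint U"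
    using sd unfolding spectral_decomp_def by auto
  have Uc: "U \<in> carrier_mat 2 2" and UH: "mat_adjoint U * U = 1\<^sub>m 2"
    using U unfolding unitary_mat_def by auto
  have Hc: "mat_adjoint U \<in> carrier_mat 2 2" using Uc adj_carrier[of U] by auto
  have Dc: "diag_real d \<in> carrier_mat 2 2" using ld unfolding diag_real_def by auto
  have r2: "r^2 = x^2+y^2+z^2" unfolding r by simp
  have d01: "diag_real d $$ (0,0) = d!0" "diag_real d $$ (1,1) = d!1"
    "diag_real d $$ (0,1) = 0" "diag_real d $$ (1,0) = 0"
    using ld by (auto simp: diag_real_index)
  have "mtrace (rhoM x y z) = mtrace (diag_real d)" unfolding rho by (rule conj_trace[OF U Dc])
  hence t1: "complex_of_real 1 = complex_of_real (d!0 + d!1)"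
    using ld d01 by (simp add: mtrace2 diag_real_dims complex_eq_iff) (simp add: field_simps)
  show "d!0 + d!1 = 1" using t1 of_real_eq_iff by metis
  have "rhoM x y z * rhoM x y z = U * (diag_real d * diag_real d) * mat_adjoint U"
  proof -
    have "rhoM x y z * rhoM x y z = U * diag_real d * (mat_adjoint U * U) * diag_real d * mat_adjoint U"
      unfolding rho using Uc Hc Dc by (simp add: assoc_mult_mat[of _ 2 2 _ 2 _ 2])
    also have "\<dots> = U * (diag_real d * diag_real d) * mat_adjoint U"
      unfolding UH using Uc Hc Dc by (simp add: assoc_mult_mat[of _ 2 2 _ 2 _ 2])
    finally show ?thesis .
  qed
  hence "mtrace (rhoM x y z * rhoM x y z) = mtrace (diag_real d * diag_real d)"
    using conj_trace[OF U, of "diag_real d * diag_real d"] Dc by auto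
  hence "complex_of_real ((1 + r^2)/2) = complex_of_real ((d!0)^2 + (d!1)^2)"
    using ld d01 r2 by (simp add: mtrace2 mult2 diag_real_dims complex_eq_iff del: index_mult_mat)
      (simp add: field_simps power2_eq_square)
  thus "(d!0)^2 + (d!1)^2 = (1 + r^2)/2" using of_real_eq_iff by metis
qed

lemma normsq_val:
  assumes P: "(SOME (U, d). spectral_decomp 2 \<rho> U d) = (U, d)"
    and sd: "spectral_decomp 2 \<rho> U d" and dr: "dim_row \<rho> = 2"
    and A: "A \<in> carrier_mat 2 2" and AH: "mat_adjoint A = A"
  shows "normsq_f g \<rho> (\<i> \<cdot>\<^sub>m (\<rho> * A - A * \<rho>)) =
    complex_of_real ((d!0 - d!1)^2 * (cmod ((mat_adjoint U * A * U) $$ (0,1)))^2 *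
       (1 / m_mean g (d!0) (d!1) + 1 / m_mean g (d!1) (d!0)))"
proof -
  have U: "unitary_mat 2 U" and ld: "length d = 2" and rho: "\<rho> = U * diag_real d * mat_adjoint U"
    using sd unfolding spectral_decomp_def by auto
  have Uc: "U \<in> carrier_mat 2 2" using U unfolding unitary_mat_def by auto
  have Hc: "mat_adjoint U \<in> carrier_mat 2 2" using Uc adj_carrier[of U] by auto
  have Dc: "diag_real d \<in> carrier_mat 2 2" using ld unfolding diag_real_def by auto
  have rc: "\<rho> \<in> carrier_mat 2 2" unfolding rho using Uc Hc Dc by auto
  define X where "X = \<i> \<cdot>\<^sub>m (\<rho> * A - A * \<rho>)"
  have Xc: "X \<in> carrier_mat 2 2" unfolding X_def using rc A by auto
  define B where "B = mat_adjoint U * A * U"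
  have Bc: "B \<in> carrier_mat 2 2" unfolding B_def using Hc A Uc by auto
  have BH: "mat_adjoint B = B"
    unfolding B_def using Hc A Uc AH
    by (simp add: adj_mult[of _ 2 2 _ 2] assoc_mult_mat[of _ 2 2 _ 2 _ 2])
  define Y where "Y = mat_adjoint U * X * U"
  have Y: "Y = \<i> \<cdot>\<^sub>m (diag_real d * B - B * diag_real d)"
    unfolding Y_def X_def B_def by (rule comm_form[OF U Dc A rho])
  define Z where "Z = mat 2 2 (\<lambda>(i,j). Y $$ (i,j) / complex_of_real (m_mean g (d!i) (d!j)))"
  have Zc: "Z \<in> carrier_mat 2 2" unfolding Z_def by auto
  have mf: "mf_inv g \<rho> X = U * Z * mat_adjoint U"
    unfolding mf_inv_def Let_def dr P Z_def Y_def by simp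
  have "normsq_f g \<rho> X = mtrace (mat_adjoint Y * Z)"
    unfolding normsq_f_def mf Y_def by (rule trace_form[OF U Xc Zc])
  also have "\<dots> = complex_of_real ((d!0 - d!1)^2 * (cmod (B $$ (0,1)))^2 *
       (1 / m_mean g (d!0) (d!1) + 1 / m_mean g (d!1) (d!0)))"
    unfolding Z_def Y by (rule trace2[OF ld Bc BH])
  finally show ?thesis unfolding X_def B_def .
qed

lemma fzero_SLD: "f_zero f_SLD = 1/2"
proof -
  have "((\<lambda>x::real. (1 + x)/2) \<longlongrightarrow> (1 + 0)/2) (at_right 0)"
    by (intro tendsto_intros) auto
  hence "(f_SLD \<longlongrightarrow> 1/2) (at_right 0)" unfolding f_SLD_def by simp
  hence "Lim (at_right (0::real)) f_SLD = 1/2"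
    by (rule tendsto_Lim[rotated]) (rule trivial_limit_at_right_real)
  then show ?thesis unfolding f_zero_def .
qed

lemma m_sym:
  assumes "F_op f" "a > 0" "b > 0"
  shows "m_mean f a b = m_mean f b a"
proof -
  have "\<forall>t>0. t * f (1/t) = f t" using assms(1) unfolding F_op_def by blast
  hence "(a/b) * f (1 / (a/b)) = f (a/b)" using assms by (meson divide_pos_pos)
  moreover have "1 / (a/b) = b/a" by simp
  ultimately have "(a/b) * f (b/a) = f (a/b)" by metis
  hence "b * f (a/b) = a * f (b/a)" using assms by (simp add: field_simps)
  thus ?thesis unfolding m_mean_def by simp
qed

theorem mainTheorem9:
  fixes x y z :: real and A :: "complex mat" and f :: "real \<Rightarrow> real"
  defines "r \<equiv> sqrt (x^2 + y^2 + z^2)"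
  assumes "0 < r" and "r < 1"
    and "A \<in> carrier_mat 2 2" and "mat_adjoint A = A"
    and "F_op_r f"
  shows "SLD_information (qubit_state x y z) A =
    complex_of_real (r^2 / (1 - m_mean (f_tilde f) (1 - r) (1 + r)))
      * f_information f (qubit_state x y z) A"
proof -
  note rp = assms(2) and r1 = assms(3) and Ac = assms(4) and AH = assms(5)
  have Fop: "F_op f" and f0: "f_zero f \<noteq> 0" using assms(6) unfolding F_op_r_def by auto
  have fpos: "\<And>t. t > 0 \<Longrightarrow> f t > 0" using Fop unfolding F_op_def by auto
  define \<rho> where "\<rho> = qubit_state x y z"
  have rhoe: "\<rho> = rhoM x y z" unfolding \<rho>_def by (rule rhoM_eq)
  have dr: "dim_row \<rho> = 2" unfolding rhoe by simp
  have ex: "\<exists>p. (case p of (U, d) \<Rightarrow> spectral_decomp 2 \<rho> U d)"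
    using spec_exists[OF r_def[THEN meta_eq_to_obj_eq] rp] unfolding rhoe by blast
  obtain U d where P: "(SOME (U, d). spectral_decomp 2 \<rho> U d) = (U, d)"
    by (metis surj_pair)
  have sd: "spectral_decomp 2 \<rho> U d"
    using someI_ex[OF ex] unfolding P by simp
  have e1: "d!0 + d!1 = 1" and e2: "(d!0)^2 + (d!1)^2 = (1 + r^2)/2"
    using eig_facts[OF sd[unfolded rhoe] r_def[THEN meta_eq_to_obj_eq]] by auto
  have ee: "(d!0 - d!1)^2 = r^2"
  proof -
    have "(d!0 - d!1)^2 = 2*((d!0)^2 + (d!1)^2) - (d!0 + d!1)^2" by (simp add: power2_eq_square algebra_simps)
    thus ?thesis unfolding e1 e2 by (simp add: field_simps)
  qed
  have dcases: "(d!0 = (1-r)/2 \<and> d!1 = (1+r)/2) \<or> (d!0 = (1+r)/2 \<and> d!1 = (1-r)/2)"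
  proof -
    have "(d!0 - d!1 - r) * (d!0 - d!1 + r) = 0" using ee by (simp add: power2_eq_square algebra_simps)
    hence "d!0 - d!1 = r \<or> d!0 - d!1 = -r" by auto
    thus ?thesis using e1 by auto
  qed
  have d0p: "d!0 > 0" and d1p: "d!1 > 0" using dcases rp r1 by auto
  define S where "S = (cmod ((mat_adjoint U * A * U) $$ (0,1)))^2"
  define K where "K = (1-r)/2 * f ((1+r)/(1-r))"
  have Fp: "f ((1+r)/(1-r)) > 0" using rp r1 by (intro fpos) simp
  have Kp: "K > 0" unfolding K_def using Fp r1 by simp
  have mK: "m_mean f (d!0) (d!1) = K \<and> m_mean f (d!1) (d!0) = K"
  proof -
    have q: "((1+r)/2)/((1-r)/2) = (1+r)/(1-r)" using r1 by (simp add: divide_simps) (simp add: algebra_simps)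
    have base: "m_mean f ((1-r)/2) ((1+r)/2) = K"
      unfolding m_mean_def K_def q ..
    have sym: "m_mean f ((1+r)/2) ((1-r)/2) = K"
      using m_sym[OF Fop, of "(1+r)/2" "(1-r)/2"] base rp r1 by simp
    from dcases show ?thesis
      by (elim disjE conjE) (simp only: base sym)+
  qed
  have mS: "m_mean f_SLD (d!0) (d!1) = 1/2 \<and> m_mean f_SLD (d!1) (d!0) = 1/2"
    using d0p d1p e1 unfolding m_mean_def f_SLD_def by (simp add: field_simps)
  have NS: "normsq_f f_SLD \<rho> (\<i> \<cdot>\<^sub>m (\<rho> * A - A * \<rho>)) = complex_of_real (r^2 * S * 4)"
  proof -
    have "normsq_f f_SLD \<rho> (\<i> \<cdot>\<^sub>m (\<rho> * A - A * \<rho>)) = complex_of_real ((d!0 - d!1)^2 * S *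
       (1 / m_mean f_SLD (d!0) (d!1) + 1 / m_mean f_SLD (d!1) (d!0)))"
      unfolding S_def by (rule normsq_val[OF P sd dr Ac AH])
    also have "\<dots> = complex_of_real (r^2 * S * 4)"
      using mS unfolding ee by (elim conjE) (simp only:, simp)
    finally show ?thesis .
  qed
  have NF: "normsq_f f \<rho> (\<i> \<cdot>\<^sub>m (\<rho> * A - A * \<rho>)) = complex_of_real (r^2 * S * (2 / K))"
  proof -
    have "normsq_f f \<rho> (\<i> \<cdot>\<^sub>m (\<rho> * A - A * \<rho>)) = complex_of_real ((d!0 - d!1)^2 * S *
       (1 / m_mean f (d!0) (d!1) + 1 / m_mean f (d!1) (d!0)))"
      unfolding S_def by (rule normsq_val[OF P sd dr Ac AH])
    also have "\<dots> = complex_of_real (r^2 * S * (2 / K))"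
      using mK unfolding ee by (elim conjE) (simp only:, simp)
    finally show ?thesis .
  qed
  have LHS: "SLD_information \<rho> A = complex_of_real (r^2 * S)"
    unfolding SLD_information_def f_information_def NS fzero_SLD by simp
  have RHSf: "f_information f \<rho> A = complex_of_real (f_zero f * r^2 * S / K)"
    unfolding f_information_def NF by simp
  have mt: "m_mean (f_tilde f) (1 - r) (1 + r) = 1 - r^2 * f_zero f / K"
  proof -
    define t where "t = (1+r)/(1-r)"
    define F where "F = f t"
    have Fp': "F > 0" unfolding F_def t_def using Fp .
    have h1: "t + 1 = 2/(1-r)" unfolding t_def using r1 by (simp add: field_simps)
    have h2: "t - 1 = 2*r/(1-r)" unfolding t_def using r1 by (simp add: field_simps)
    have "m_mean (f_tilde f) (1 - r) (1 + r) = (1-r) * ((t+1) - (t-1)^2 * f_zero f / F) / 2"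
      unfolding m_mean_def f_tilde_def t_def F_def by simp
    also have "\<dots> = (1-r) * (2/(1-r) - (2*r/(1-r))^2 * f_zero f / F) / 2" unfolding h1 h2 ..
    also have "\<dots> = 1 - r^2 * f_zero f / ((1-r)/2 * F)"
    proof -
      have nz: "1 - r \<noteq> 0" "F \<noteq> 0" using r1 Fp' by auto
      have a1: "(1-r) * (2/(1-r)) = 2" using nz(1) by (simp add: field_simps)
      have gen: "u * ((2*r/u)^2 * c / F) = 2 * (r^2 * c / (u/2 * F))" if "u \<noteq> 0" for u c
        using that nz(2) by (simp add: field_simps power2_eq_square)
      have a2: "(1-r) * ((2*r/(1-r))^2 * f_zero f / F) = 2 * (r^2 * f_zero f / ((1-r)/2 * F))"
        by (rule gen[OF nz(1)])
      show ?thesis unfolding right_diff_distrib[of "1-r"] a1 a2 by simp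
    qed
    finally show ?thesis unfolding K_def F_def t_def .
  qed
  have "complex_of_real (r^2 / (1 - m_mean (f_tilde f) (1 - r) (1 + r))) * f_information f \<rho> A
      = complex_of_real (r^2 / (r^2 * f_zero f / K) * (f_zero f * r^2 * S / K))"
    unfolding RHSf mt by simp
  also have "r^2 / (r^2 * f_zero f / K) * (f_zero f * r^2 * S / K) = r^2 * S"
    using rp Kp f0 by (simp add: field_simps)
  finally show ?thesis using LHS unfolding \<rho>_def by simp
qed

end
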